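(* In the setting below, the function $F=F(\theta,m,\bar a)$ on $\check T\otimes\mathbb{C}$, $$F(x)=\exp\!\Big(\tfrac{k}{n}\hat I(\bar m)(x)+\tfrac{k}{n}\phi(\bar m)\,\bar a\Big)\,\theta(x+\bar m\otimes\bar a),$$ does not depend on the choice of the extension $\bar m\in\check T$ of $m:\mathbb{T}[n]\to T$.
   Context: $\mathbb{T}$ is the circle group, $\mathbb{T}[n]$ its subgroup of order $n\ge1$. $G$ is a compact connected Lie group with maximal torus $T$, Weyl group $W$, $\check T=\mathrm{Hom}(\mathbb{T},T)$, $\hat T=\mathrm{Hom}(T,\mathbb{T})$; characters are extended $\mathbb{C}$-linearly to $\check T\otimes\mathbb{C}$ and $\mathbb{Z}[\hat T]$ is viewed as functions of $x\in\check T\otimes\mathbb{C}$ via $\chi\mapsto e^{\chi(x)}$. Let $\xi\in H^4(BG;\mathbb{Z})$ be positive definite, with quadratic form $\phi:\check T\to\mathbb{Z}$ ($\phi(m)$ = coefficient of $z^2$ in $(Bm)^*\xi$, $z\in H^2(B\mathbb{T};\mathbb{Z})$ the generator), $I(a,b)=\phi(a+b)-\phi(a)-\phi(b)$, $\hat I(a)(b)=I(a,b)$. Fix $\tau$ with $\mathrm{Im}\,\tau>0$, $q=e^{2\pi i\tau}$, $C=\mathbb{C}/(2\pi i\mathbb{Z}+2\pi i\tau\mathbb{Z})$. A theta function of level $\xi$ is $\theta\in\mathbb{Z}[\hat T]((q))$, holomorphic in $(x,\tau)$, with $\theta(x+2\pi i\tau m)=e^{-\hat I(m)(x)}q^{-\phi(m)}\theta(x)$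 for $m\in\check T$ and $\theta(wx)=\theta(x)$ for $w\in W$. Let $m:\mathbb{T}[n]\to T$ be a homomorphism, $a\in C$ with $na=0$, $\bar a\in\mathbb{C}$ a lift of $a$, and $\ell,k\in\mathbb{Z}$ the integers with $n\bar a=2\pi i\ell+2\pi i\tau k$. An extension $\bar m\in\check T$ of $m$ is a cocharacter with $\bar m|_{\mathbb{T}[n]}=m$. *)

theory Defs
  imports "HOL-Analysis.Analysis"
begin

text \<open>Coordinates: the maximal torus T is identified with the product of r = CARD('r)
copies of the circle group (unit complex numbers), so the cocharacter lattice
is int^'r, the character lattice is int^'r (pairing = dot product), and
the complexified cocharacter space is complex^'r.  A cocharacter mb acts by
t |-> (t^(mb$i))_i, and the character chi is evaluated at x as
exp(sum_i chi_i x_i).\<close>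

definition qf_I :: "(int^'r \<Rightarrow> int) \<Rightarrow> int^'r \<Rightarrow> int^'r \<Rightarrow> int" where
  "qf_I \<phi> a b = \<phi> (a + b) - \<phi> a - \<phi> b"

definition int_scale :: "int \<Rightarrow> int^'r \<Rightarrow> int^'r" where
  "int_scale c a = (\<chi> i. c * a $ i)"

definition int_quadratic_form :: "(int^'r \<Rightarrow> int) \<Rightarrow> bool" where
  "int_quadratic_form \<phi> \<longleftrightarrow>
     (\<forall>c a. \<phi> (int_scale c a) = c^2 * \<phi> a) \<and>
     (\<forall>a b c. qf_I \<phi> (a + b) c = qf_I \<phi> a c + qf_I \<phi> b c)"

definition positive_definite :: "(int^'r \<Rightarrow> int) \<Rightarrow> bool" where
  "positive_definite \<phi> \<longleftrightarrow> (\<forall>a. a \<noteq> 0 \<longrightarrow> \<phi> a > 0)"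

definition Ihat :: "(int^'r \<Rightarrow> int) \<Rightarrow> int^'r \<Rightarrow> complex^'r \<Rightarrow> complex" where
  "Ihat \<phi> a x = (\<Sum>i\<in>UNIV. of_int (qf_I \<phi> a (axis i 1)) * x $ i)"

definition char_eval :: "int^'r \<Rightarrow> complex^'r \<Rightarrow> complex" where
  "char_eval \<chi>' x = (\<Sum>i\<in>UNIV. of_int (\<chi>' $ i) * x $ i)"

definition cochar_tensor :: "int^'r \<Rightarrow> complex \<Rightarrow> complex^'r" where
  "cochar_tensor m z = (\<chi> i. of_int (m $ i) * z)"

text \<open>Action of a Weyl group element, given as an integer matrix on the
cocharacter lattice, extended C-linearly.\<close>
definition weyl_act :: "int^'r^'r \<Rightarrow> complex^'r \<Rightarrow> complex^'r" where
  "weyl_act w x = (\<chi> i. \<Sum>j\<in>UNIV. of_int (w $ i $ j) * x $ j)"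

definition upper_half_plane :: "complex set" where
  "upper_half_plane = {\<tau>. 0 < Im \<tau>}"

text \<open>It is an element of
Z[That]((q)) (integer coefficients c j chi, finitely many characters per
q-power, bounded below in j), the series converges to theta, theta is
holomorphic in (tau,x) (rendered as jointly continuous and holomorphic in each
variable separately), quasi-periodic and W-invariant.\<close>
definition theta_function ::
  "(int^'r \<Rightarrow> int) \<Rightarrow> (int^'r^'r) set \<Rightarrow> (complex \<Rightarrow> complex^'r \<Rightarrow> complex) \<Rightarrow> bool" where
  "theta_function \<phi> W \<theta> \<longleftrightarrow>
     (\<exists>c :: int \<Rightarrow> int^'r \<Rightarrow> int.
        (\<forall>j. finite {\<chi>'. c j \<chi>' \<noteq> 0}) \<and>
        (\<exists>j0. \<forall>j<j0. \<forall>\<chi>'. c j \<chi>' = 0) \<and>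
        (\<forall>\<tau>\<in>upper_half_plane. \<forall>x.
           ((\<lambda>j. (\<Sum>\<chi>'\<in>{\<chi>'. c j \<chi>' \<noteq> 0}. of_int (c j \<chi>') * exp (char_eval \<chi>' x))
                  * exp (2 * complex_of_real pi * \<i> * \<tau> * of_int j)) has_sum \<theta> \<tau> x) UNIV)) \<and>
     continuous_on (upper_half_plane \<times> UNIV) (\<lambda>p. \<theta> (fst p) (snd p)) \<and>
     (\<forall>x. (\<lambda>\<tau>. \<theta> \<tau> x) holomorphic_on upper_half_plane) \<and>
     (\<forall>\<tau>\<in>upper_half_plane. \<forall>x i.
        (\<lambda>z. \<theta> \<tau> (\<chi> j. if j = i then z else x $ j)) holomorphic_on UNIV) \<and>
     (\<forall>\<tau>\<in>upper_half_plane. \<forall>m x.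
        \<theta> \<tau> (x + cochar_tensor m (2 * complex_of_real pi * \<i> * \<tau>)) =
          exp (- Ihat \<phi> m x) * exp (- 2 * complex_of_real pi * \<i> * \<tau> * of_int (\<phi> m)) * \<theta> \<tau> x) \<and>
     (\<forall>\<tau>\<in>upper_half_plane. \<forall>w\<in>W. \<forall>x. \<theta> \<tau> (weyl_act w x) = \<theta> \<tau> x)"

definition circ_tors :: "nat \<Rightarrow> complex set" where
  "circ_tors n = {z. z ^ n = 1}"

text \<open>A homomorphism T[n] -> T (only its values on T[n] matter).\<close>
definition torus_hom :: "nat \<Rightarrow> (complex \<Rightarrow> complex^'r) \<Rightarrow> bool" where
  "torus_hom n m \<longleftrightarrow>
     (\<forall>z\<in>circ_tors n. \<forall>i. norm (m z $ i) = 1) \<and>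
     (\<forall>z\<in>circ_tors n. \<forall>w\<in>circ_tors n. m (z * w) = (\<chi> i. m z $ i * m w $ i))"

definition extends_hom :: "nat \<Rightarrow> (complex \<Rightarrow> complex^'r) \<Rightarrow> int^'r \<Rightarrow> bool" where
  "extends_hom n m mb \<longleftrightarrow> (\<forall>z\<in>circ_tors n. m z = (\<chi> i. z powi (mb $ i)))"

definition F_fun ::
  "(int^'r \<Rightarrow> int) \<Rightarrow> (complex \<Rightarrow> complex^'r \<Rightarrow> complex) \<Rightarrow> complex \<Rightarrow> nat \<Rightarrow> int \<Rightarrow> complex
     \<Rightarrow> int^'r \<Rightarrow> complex^'r \<Rightarrow> complex" where
  "F_fun \<phi> \<theta> \<tau> n k abar mb x =
     exp (of_int k / of_nat n * Ihat \<phi> mb x + of_int k / of_nat n * of_int (\<phi> mb) * abar)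
       * \<theta> \<tau> (x + cochar_tensor mb abar)"

end

theory Submission
  imports Defs
begin

lemma qfI_sym: "qf_I \<phi> a b = qf_I \<phi> b a"
  unfolding qf_I_def by (simp add: add.commute)

lemma phi_add: "\<phi> (a + b) = \<phi> a + \<phi> b + qf_I \<phi> a b"
  unfolding qf_I_def by simp

context fixes \<phi> :: "int^'r \<Rightarrow> int" assumes Q: "int_quadratic_form \<phi>"
begin

lemma addL: "qf_I \<phi> (a + b) c = qf_I \<phi> a c + qf_I \<phi> b c"
  using Q unfolding int_quadratic_form_def by blast

lemma addR: "qf_I \<phi> c (a + b) = qf_I \<phi> c a + qf_I \<phi> c b"
proof -
  have "qf_I \<phi> c (a + b) = qf_I \<phi> (a + b) c" by (rule qfI_sym)
  also have "\<dots> = qf_I \<phi> a c + qf_I \<phi> b c" by (rule addL)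
  also have "\<dots> = qf_I \<phi> c a + qf_I \<phi> c b" using qfI_sym[of \<phi> a c] qfI_sym[of \<phi> b c] by simp
  finally show ?thesis .
qed

lemma scale: "\<phi> (int_scale c a) = c^2 * \<phi> a"
  using Q unfolding int_quadratic_form_def by blast

lemma int_scale_eq: "int_scale c a = c *s a"
  unfolding int_scale_def by (simp add: vec_eq_iff)

lemma zeroL: "qf_I \<phi> 0 c = 0"
  using addL[of 0 0 c] by simp

lemma negL: "qf_I \<phi> (- a) c = - qf_I \<phi> a c"
  using addL[of a "-a" c] zeroL by simp

lemma natL: "qf_I \<phi> (int j *s a) c = int j * qf_I \<phi> a c"
proof (induction j)
  case 0 then show ?case using zeroL by (simp add: vec_eq_iff zero_vec_def)
next
  case (Suc j)
  have "int (Suc j) *s a = int j *s a + a" by (simp add: vec_eq_iff distrib_right)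
  then show ?case using Suc addL by (simp add: distrib_right)
qed

lemma intL: "qf_I \<phi> (c *s a) b = c * qf_I \<phi> a b"
proof (cases "c \<ge> 0")
  case True
  then have "c = int (nat c)" by simp
  then obtain j where "c = int j" by blast
  then show ?thesis using natL[of j a b] by simp
next
  case False
  define j where "j = nat (- c)"
  have j: "c = - int j" using False unfolding j_def by simp
  have "c *s a = - (int j *s a)" using j by (simp add: vec_eq_iff)
  then show ?thesis using natL[of j a b] negL j by simp
qed

lemma sumR: "finite S \<Longrightarrow> qf_I \<phi> a (sum f S) = (\<Sum>s\<in>S. qf_I \<phi> a (f s))"
  apply (induction S rule: finite_induct)
  apply (simp add: qfI_sym[of \<phi> a 0] zeroL)
  by (simp add: addR)

lemma phi_scale: "\<phi> (c *s a) = c^2 * \<phi> a"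
  using scale[of c a] unfolding int_scale_eq .

lemma Idiag: "qf_I \<phi> a a = 2 * \<phi> a"
proof -
  have "a + a = 2 *s a" by (simp add: vec_eq_iff)
  then show ?thesis unfolding qf_I_def using phi_scale[of 2 a] by simp
qed

lemma basis_exp: "(b::int^'r) = (\<Sum>i\<in>UNIV. (b $ i) *s axis i 1)"
proof -
  have "(\<Sum>i\<in>UNIV. (b $ i) * (axis i 1 :: int^'r) $ j) = b $ j" for j
  proof -
    have "(\<Sum>i\<in>UNIV. (b $ i) * (axis i 1 :: int^'r) $ j) = (\<Sum>i\<in>UNIV. if j = i then b $ i else 0)"
      by (rule sum.cong) (auto simp: axis_def)
    also have "\<dots> = b $ j" by simp
    finally show ?thesis .
  qed
  then show ?thesis by (simp add: vec_eq_iff)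
qed

lemma I_basis: "qf_I \<phi> a b = (\<Sum>i\<in>UNIV. b $ i * qf_I \<phi> a (axis i 1))"
proof -
  have "qf_I \<phi> a b = qf_I \<phi> a (\<Sum>i\<in>UNIV. (b $ i) *s axis i 1)"
    by (rule arg_cong[where f="qf_I \<phi> a", OF basis_exp])
  also have "\<dots> = (\<Sum>i\<in>UNIV. qf_I \<phi> a ((b $ i) *s axis i 1))" by (simp add: sumR)
  also have "\<dots> = (\<Sum>i\<in>UNIV. b $ i * qf_I \<phi> a (axis i 1))"
    by (rule sum.cong) (simp_all add: qfI_sym[of \<phi> a] intL)
  finally show ?thesis .
qed

lemma H1: "Ihat \<phi> (a + b) x = Ihat \<phi> a x + Ihat \<phi> b x"
  unfolding Ihat_def by (simp add: addL distrib_right sum.distrib)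

lemma H2: "Ihat \<phi> (c *s a) x = of_int c * Ihat \<phi> a x"
  unfolding Ihat_def by (simp add: intL sum_distrib_left mult.assoc)

lemma H3: "Ihat \<phi> a (x + y) = Ihat \<phi> a x + Ihat \<phi> a y"
  unfolding Ihat_def by (simp add: distrib_left sum.distrib)

lemma H4: "Ihat \<phi> a (cochar_tensor b z) = of_int (qf_I \<phi> a b) * z"
proof -
  have "Ihat \<phi> a (cochar_tensor b z) = (\<Sum>i\<in>UNIV. of_int (b $ i) * of_int (qf_I \<phi> a (axis i 1)) * z)"
    unfolding Ihat_def cochar_tensor_def by (simp add: mult_ac)
  also have "\<dots> = (\<Sum>i\<in>UNIV. of_int (b $ i) * of_int (qf_I \<phi> a (axis i 1))) * z"
    by (simp add: sum_distrib_right)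
  also have "\<dots> = of_int (qf_I \<phi> a b) * z"
    by (simp add: I_basis[of a b])
  finally show ?thesis .
qed

end

lemma theta_periodic:
  assumes T: "theta_function \<phi> W \<theta>" and tau: "0 < Im \<tau>"
  shows "\<theta> \<tau> (x + cochar_tensor d (2 * complex_of_real pi * \<i> * of_int l)) = \<theta> \<tau> x"
proof -
  obtain c :: "int \<Rightarrow> int^'a \<Rightarrow> int" where
    c: "\<forall>\<tau>\<in>upper_half_plane. \<forall>x.
           ((\<lambda>j. (\<Sum>\<chi>'\<in>{\<chi>'. c j \<chi>' \<noteq> 0}. of_int (c j \<chi>') * exp (char_eval \<chi>' x))
                  * exp (2 * complex_of_real pi * \<i> * \<tau> * of_int j)) has_sum \<theta> \<tau> x) UNIV"
    using T unfolding theta_function_def by blast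
  have tu: "\<tau> \<in> upper_half_plane" using tau by (simp add: upper_half_plane_def)
  have ce: "exp (char_eval \<chi>' (x + cochar_tensor d (2 * complex_of_real pi * \<i> * of_int l)))
      = exp (char_eval \<chi>' x)" for \<chi>' :: "int^'a"
  proof -
    have "char_eval \<chi>' (x + cochar_tensor d (2 * complex_of_real pi * \<i> * of_int l))
       = char_eval \<chi>' x + \<i> * (of_int (l * (\<Sum>i\<in>UNIV. \<chi>' $ i * d $ i)) * (of_real pi * 2))"
      unfolding char_eval_def cochar_tensor_def
      by (simp add: distrib_left sum.distrib sum_distrib_left sum_distrib_right mult_ac)
    then show ?thesis by (simp only: exp_plus_2pin)
  qed
  have "((\<lambda>j. (\<Sum>\<chi>'\<in>{\<chi>'. c j \<chi>' \<noteq> 0}. of_int (c j \<chi>') * exp (char_eval \<chi>' x))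
                  * exp (2 * complex_of_real pi * \<i> * \<tau> * of_int j)) has_sum
        \<theta> \<tau> (x + cochar_tensor d (2 * complex_of_real pi * \<i> * of_int l))) UNIV"
  proof -
    have "((\<lambda>j. (\<Sum>\<chi>'\<in>{\<chi>'. c j \<chi>' \<noteq> 0}. of_int (c j \<chi>') * exp (char_eval \<chi>' (x + cochar_tensor d (2 * complex_of_real pi * \<i> * of_int l))))
                  * exp (2 * complex_of_real pi * \<i> * \<tau> * of_int j)) has_sum
        \<theta> \<tau> (x + cochar_tensor d (2 * complex_of_real pi * \<i> * of_int l))) UNIV"
      using c tu by blast
    then show ?thesis by (simp only: ce)
  qed
  moreover have "((\<lambda>j. (\<Sum>\<chi>'\<in>{\<chi>'. c j \<chi>' \<noteq> 0}. of_int (c j \<chi>') * exp (char_eval \<chi>' x))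
                  * exp (2 * complex_of_real pi * \<i> * \<tau> * of_int j)) has_sum \<theta> \<tau> x) UNIV"
    using c tu by blast
  ultimately show ?thesis using has_sum_unique by blast
qed

lemma ext_diff:
  assumes n: "n \<ge> 1" and e1: "extends_hom n m mb1" and e2: "extends_hom n m mb2"
  shows "\<exists>d. mb1 = mb2 + int n *s d"
proof -
  define w :: complex where "w = 2 * complex_of_real pi * \<i> / of_nat n"
  define z where "z = exp w"
  have "z ^ n = exp (of_nat n * w)" unfolding z_def by (simp add: exp_of_nat_mult)
  also have "\<dots> = 1" using n unfolding w_def by simp
  finally have zc: "z \<in> circ_tors n" by (simp add: circ_tors_def)
  have "\<exists>t::int. mb1 $ i - mb2 $ i = int n * t" for i
  proof -
    have "z powi (mb1 $ i) = z powi (mb2 $ i)"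
    proof -
      have "m z = (\<chi> i. z powi (mb1 $ i))" "m z = (\<chi> i. z powi (mb2 $ i))"
        using e1 e2 zc unfolding extends_hom_def by auto
      then have "(\<chi> i. z powi (mb1 $ i)) $ i = (\<chi> i. z powi (mb2 $ i)) $ i" by simp
      then show ?thesis by simp
    qed
    then have "exp (of_int (mb1 $ i) * w) = exp (of_int (mb2 $ i) * w)"
      unfolding z_def by (simp add: exp_power_int)
    then have "exp (of_int (mb1 $ i) * w - of_int (mb2 $ i) * w) = 1"
      by (simp add: exp_diff)
    then have "exp (of_int (mb1 $ i - mb2 $ i) * w) = 1" by (simp add: left_diff_distrib)
    then obtain t :: int where "Im (of_int (mb1 $ i - mb2 $ i) * w) = of_int (2 * t) * pi"
      using exp_eq_1 by blast
    then have "real_of_int (mb1 $ i - mb2 $ i) * (2 * pi) / real n = real_of_int t * (2 * pi)"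
      unfolding w_def by (simp add: algebra_simps)
    then have "real_of_int (mb1 $ i - mb2 $ i) * (2 * pi) = real_of_int t * (2 * pi) * real n"
      using n by (simp add: divide_eq_eq)
    then have "real_of_int (mb1 $ i - mb2 $ i) * (2 * pi) = (real n * of_int t) * (2 * pi)"
      by (simp only: mult_ac)
    then have "real_of_int (mb1 $ i - mb2 $ i) = real n * of_int t"
      by simp
    then have "real_of_int (mb1 $ i - mb2 $ i) = real_of_int (int n * t)" by simp
    then have "mb1 $ i - mb2 $ i = int n * t" by (simp only: of_int_eq_iff)
    then show ?thesis by blast
  qed
  then obtain t where "\<And>i. mb1 $ i - mb2 $ i = int n * t i" by metis
  then have "mb1 = mb2 + int n *s (\<chi> i. t i)" by (simp add: vec_eq_iff algebra_simps)
  then show ?thesis by blast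
qed


lemma key_alg:
  fixes K nn k A0 B Pm D M a p l t :: complex
  assumes h1: "K * nn = k" and h2: "nn * a = 2 * p * \<i> * l + 2 * p * \<i> * t * k"
  shows "K * (A0 + nn * B) + K * (Pm + nn^2 * D + nn * M) * a + - (k * (B + M * a + 2 * D * (2 * p * \<i> * l))) + - 2 * p * \<i> * t * (k^2 * D) = K * A0 + K * Pm * a + \<i> * (- k * l * D * (p * 2))"
proof -
  have "K * (A0 + nn * B) + K * (Pm + nn^2 * D + nn * M) * a + - (k * (B + M * a + 2 * D * (2 * p * \<i> * l))) + - 2 * p * \<i> * t * (k^2 * D) - (K * A0 + K * Pm * a + \<i> * (- k * l * D * (p * 2)))
     = (K * nn - k) * (B + nn * D * a + M * a) + k * D * (nn * a - (2 * p * \<i> * l + 2 * p * \<i> * t * k))"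
    by (simp add: algebra_simps power2_eq_square)
  also have "\<dots> = 0" using h1 h2 by simp
  finally show ?thesis by simp
qed

theorem lemma5p2:
  fixes \<phi> :: "int^'r \<Rightarrow> int" and W :: "(int^'r^'r) set"
    and \<theta> :: "complex \<Rightarrow> complex^'r \<Rightarrow> complex"
    and \<tau> abar :: complex and n :: nat and l k :: int
    and m :: "complex \<Rightarrow> complex^'r" and mb1 mb2 :: "int^'r"
  assumes "int_quadratic_form \<phi>" and "positive_definite \<phi>"
    and "theta_function \<phi> W \<theta>"
    and "0 < Im \<tau>"
    and "n \<ge> 1"
    and "torus_hom n m"
    and "of_nat n * abar = 2 * complex_of_real pi * \<i> * of_int l + 2 * complex_of_real pi * \<i> * \<tau> * of_int k"
    and "extends_hom n m mb1" and "extends_hom n m mb2"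
  shows "F_fun \<phi> \<theta> \<tau> n k abar mb1 = F_fun \<phi> \<theta> \<tau> n k abar mb2"
proof
  fix x
  note Q = assms(1)
  have T: "theta_function \<phi> W \<theta>" and tau: "0 < Im \<tau>" and n1: "n \<ge> 1" and na: "of_nat n * abar = 2 * complex_of_real pi * \<i> * of_int l + 2 * complex_of_real pi * \<i> * \<tau> * of_int k"
    using assms by auto
  obtain d where d: "mb1 = mb2 + int n *s d" using ext_diff[OF n1 assms(8,9)] by blast
  define mb where "mb = mb2"
  define y where "y = x + cochar_tensor mb abar"
  define P where "P = cochar_tensor d (2 * complex_of_real pi * \<i> * of_int l)"
  define Qv where "Qv = cochar_tensor (k *s d) (2 * complex_of_real pi * \<i> * \<tau>)"
  have ct: "cochar_tensor mb1 abar = cochar_tensor mb abar + P + Qv"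
  proof -
    have a: "of_int (mb1 $ i) * abar = of_int (mb $ i) * abar + of_int (d $ i) * (of_nat n * abar)" for i
      using d unfolding mb_def by (simp add: algebra_simps)
    have b: "of_int (d $ i) * (of_nat n * abar) = of_int (d $ i) * (2 * complex_of_real pi * \<i> * of_int l)
       + of_int (k * d $ i) * (2 * complex_of_real pi * \<i> * \<tau>)" for i
      by (simp only: na) (simp add: algebra_simps)
    show ?thesis unfolding P_def Qv_def cochar_tensor_def
      by (simp add: vec_eq_iff a b)
  qed
  have quasi: "\<theta> \<tau> (y + P + Qv) = exp (- Ihat \<phi> (k *s d) (y + P)) *
      exp (- 2 * complex_of_real pi * \<i> * \<tau> * of_int (\<phi> (k *s d))) * \<theta> \<tau> (y + P)"
  proof -
    have "\<forall>\<tau>\<in>upper_half_plane. \<forall>m x.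
        \<theta> \<tau> (x + cochar_tensor m (2 * complex_of_real pi * \<i> * \<tau>)) =
          exp (- Ihat \<phi> m x) * exp (- 2 * complex_of_real pi * \<i> * \<tau> * of_int (\<phi> m)) * \<theta> \<tau> x"
      using T unfolding theta_function_def by blast
    moreover have "\<tau> \<in> upper_half_plane" using tau by (simp add: upper_half_plane_def)
    ultimately show ?thesis unfolding Qv_def by blast
  qed
  have per: "\<theta> \<tau> (y + P) = \<theta> \<tau> y"
    unfolding P_def using theta_periodic[OF T tau] by blast
  have th1: "\<theta> \<tau> (x + cochar_tensor mb1 abar) = exp (- Ihat \<phi> (k *s d) (y + P)) *
      exp (- 2 * complex_of_real pi * \<i> * \<tau> * of_int (\<phi> (k *s d))) * \<theta> \<tau> y"
    using quasi per ct unfolding y_def by (simp add: add.assoc)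
  define A0 where "A0 = Ihat \<phi> mb x"
  define B where "B = Ihat \<phi> d x"
  define M where "M = qf_I \<phi> mb d"
  define D where "D = \<phi> d"
  have e1: "Ihat \<phi> mb1 x = A0 + of_nat n * B"
    unfolding A0_def B_def d mb_def using H1[OF Q] H2[OF Q] by simp
  have e2: "\<phi> mb1 = \<phi> mb + int n ^ 2 * D + int n * M"
  proof -
    have "\<phi> mb1 = \<phi> mb + \<phi> (int n *s d) + qf_I \<phi> mb (int n *s d)"
      unfolding d mb_def by (rule phi_add)
    also have "qf_I \<phi> mb (int n *s d) = int n * M"
      unfolding M_def by (simp add: qfI_sym[of _ mb] intL[OF Q])
    finally show ?thesis unfolding D_def by (simp add: phi_scale[OF Q])
  qed
  have e3: "Ihat \<phi> (k *s d) (y + P) = of_int k * (B + of_int M * abar + of_int (2 * D) * (2 * complex_of_real pi * \<i> * of_int l))"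
  proof -
    have "Ihat \<phi> (k *s d) (y + P) = of_int k * (Ihat \<phi> d x + Ihat \<phi> d (cochar_tensor mb abar) + Ihat \<phi> d P)"
      unfolding y_def by (simp add: H2[OF Q] H3[OF Q] distrib_left)
    also have "Ihat \<phi> d (cochar_tensor mb abar) = of_int M * abar"
      unfolding M_def by (simp add: H4[OF Q] qfI_sym[of _ d])
    also have "Ihat \<phi> d P = of_int (2 * D) * (2 * complex_of_real pi * \<i> * of_int l)"
      unfolding P_def D_def by (simp add: H4[OF Q] Idiag[OF Q])
    finally show ?thesis unfolding B_def .
  qed
  have e4: "\<phi> (k *s d) = k^2 * D" unfolding D_def using phi_scale[OF Q] by blast
  have nz: "(of_nat n :: complex) \<noteq> 0" using n1 by simp
  define K :: complex where "K = of_int k / of_nat n"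
  have Kn: "K * of_nat n = of_int k" unfolding K_def using nz by simp
  have key: "K * Ihat \<phi> mb1 x + K * of_int (\<phi> mb1) * abar
      + (- Ihat \<phi> (k *s d) (y + P)) + (- 2 * complex_of_real pi * \<i> * \<tau> * of_int (\<phi> (k *s d)))
      = (K * A0 + K * of_int (\<phi> mb) * abar)
        + \<i> * (of_int (- k * l * D) * (of_real pi * 2))"
    unfolding e1 e2 e3 e4
    by (simp only: of_int_add of_int_mult of_int_power of_int_of_nat_eq of_int_minus of_int_numeral) (rule key_alg[OF Kn na])
  have "F_fun \<phi> \<theta> \<tau> n k abar mb1 x
     = exp (K * Ihat \<phi> mb1 x + K * of_int (\<phi> mb1) * abar
      + (- Ihat \<phi> (k *s d) (y + P)) + (- 2 * complex_of_real pi * \<i> * \<tau> * of_int (\<phi> (k *s d)))) * \<theta> \<tau> y"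
    unfolding F_fun_def th1 K_def[symmetric] exp_add by (simp only: mult_ac)
  also have "\<dots> = exp (K * A0 + K * of_int (\<phi> mb) * abar) * \<theta> \<tau> y"
    unfolding key by (simp only: exp_plus_2pin)
  also have "\<dots> = F_fun \<phi> \<theta> \<tau> n k abar mb2 x"
    unfolding F_fun_def A0_def y_def mb_def K_def by simp
  finally show "F_fun \<phi> \<theta> \<tau> n k abar mb1 x = F_fun \<phi> \<theta> \<tau> n k abar mb2 x" .
qed

end
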